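(* In the setting below, the bi-orthogonal polynomials satisfy the recursion relations $$A\widehat p^{(1)}=z^aB\widehat p^{(1)},\qquad B^Th^{-1}p^{(2)}=z^bA^Th^{-1}p^{(2)} .$$
   Context: Let $a,b\geq1$ and let $\mu=(\mu_{ij})_{i,j\ge0}$ be a semi-infinite complex matrix with $\mu_{i+a,j+b}=\mu_{ij}$; set $\widehat\mu_{ij}=\mu_{i,j+b}$, and define bilinear forms on $\mathbb C[z]$ by $\langle z^i,z^j\rangle_\mu=\mu_{ij}$, $\langle z^i,z^j\rangle_{\widehat\mu}=\widehat\mu_{ij}$. Let $p^{(1)}_j,p^{(2)}_j,\widehat p^{(1)}_j,\widehat p^{(2)}_j$ ($j\ge0$) be monic polynomials of degree $j$ with $\langle p^{(1)}_i,p^{(2)}_j\rangle_\mu=\delta_{ij}h_i$, $\langle \widehat p^{(1)}_i,\widehat p^{(2)}_j\rangle_{\widehat\mu}=\delta_{ij}\widehat h_i$ (all $h_i,\widehat h_i\neq0$). Let $S_1,S_2$ be semi-infinite matrices with $p^{(1)}_i(z)=\sum_{k=0}^i(S_1)_{ik}z^k$, $p^{(2)}_i(z)=h_i\sum_{k=0}^i(S_2^{-1})_{ki}z^k$, and $\widehat S_1,\widehat S_2$ defined analogously from $\widehat p^{(1)},\widehat p^{(2)},\widehat h$. Here $\Lambda$ is the semi-infinite matrix $\Lambda_{ij}=\delta_{i+1,j}$ and $\Lambda^{-1}$ its transpose. Assume $S_1\Lambda^a\widehat S_1^{-1}=S_2\widehat S_2^{-1}=:A$ and $S_1\widehat S_1^{-1}=S_2\Lambda^{-b}\widehat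 S_2^{-1}=:B$. $p^{(i)}$, $\widehat p^{(i)}$ denote the column vectors with $j$-th entries $p^{(i)}_j$, $\widehat p^{(i)}_j$; $h=\mathrm{diag}(h_j)$; ${}^T$ is transpose. *)

theory Defs
  imports "HOL-Analysis.Analysis" "HOL-Computational_Algebra.Polynomial"
begin

type_synonym cmat = "nat \<Rightarrow> nat \<Rightarrow> complex"

text \<open>Matrix product; every product occurring in the statement has only finitely
  many nonzero terms in each entry, so the (unconditional) infinite sum is a finite sum.\<close>
definition mmult :: "cmat \<Rightarrow> cmat \<Rightarrow> cmat" where
  "mmult M N = (\<lambda>i j. infsum (\<lambda>k. M i k * N k j) UNIV)"

definition midentity :: cmat where
  "midentity = (\<lambda>i j. if i = j then 1 else 0)"

fun mpow :: "cmat \<Rightarrow> nat \<Rightarrow> cmat" where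
  "mpow M 0 = midentity"
| "mpow M (Suc n) = mmult (mpow M n) M"

definition mtranspose :: "cmat \<Rightarrow> cmat" where
  "mtranspose M = (\<lambda>i j. M j i)"

definition Lam :: cmat where
  "Lam = (\<lambda>i j. if j = i + 1 then 1 else 0)"

definition Lam_inv :: cmat where
  "Lam_inv = mtranspose Lam"

definition bilin :: "cmat \<Rightarrow> complex poly \<Rightarrow> complex poly \<Rightarrow> complex" where
  "bilin \<mu> p q = (\<Sum>i\<le>degree p. \<Sum>j\<le>degree q. coeff p i * coeff q j * \<mu> i j)"

definition monic_deg :: "complex poly \<Rightarrow> nat \<Rightarrow> bool" where
  "monic_deg p n \<longleftrightarrow> degree p = n \<and> lead_coeff p = 1"

end

theory Submission
  imports Defs
begin

lemma infsum_supp: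
  fixes f :: "nat \<Rightarrow> complex"
  assumes "finite F" "\<And>k. k \<notin> F \<Longrightarrow> f k = 0"
  shows "infsum f UNIV = sum f F"
proof -
  have "infsum f UNIV = infsum f F"
    by (rule infsum_cong_neutral) (use assms in auto)
  then show ?thesis using assms by simp
qed

lemma mmult_fin:
  assumes "finite F" "\<And>k. k \<notin> F \<Longrightarrow> M i k * N k j = 0"
  shows "mmult M N i j = (\<Sum>k\<in>F. M i k * N k j)"
  unfolding mmult_def by (rule infsum_supp[OF assms])

definition rowfin :: "cmat \<Rightarrow> bool" where
  "rowfin M \<longleftrightarrow> (\<forall>i. finite {k. M i k \<noteq> 0})"
definition colfin :: "cmat \<Rightarrow> bool" where
  "colfin M \<longleftrightarrow> (\<forall>j. finite {k. M k j \<noteq> 0})"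

lemma mmult_row:
  assumes "rowfin M"
  shows "mmult M N i j = (\<Sum>k\<in>{k. M i k \<noteq> 0}. M i k * N k j)"
  by (rule mmult_fin) (use assms in \<open>auto simp: rowfin_def\<close>)

lemma rowfin_mmult:
  assumes "rowfin M" "rowfin N"
  shows "rowfin (mmult M N)"
  unfolding rowfin_def
proof
  fix i
  let ?K = "{k. M i k \<noteq> 0}"
  let ?U = "\<Union>k\<in>?K. {m. N k m \<noteq> 0}"
  have fU: "finite ?U" using assms by (auto simp: rowfin_def)
  have "{m. mmult M N i m \<noteq> 0} \<subseteq> ?U"
  proof
    fix m assume "m \<in> {m. mmult M N i m \<noteq> 0}"
    then have "(\<Sum>k\<in>?K. M i k * N k m) \<noteq> 0" using mmult_row[OF assms(1)] by simp
    then obtain k where "k \<in> ?K" "M i k * N k m \<noteq> 0" by (meson sum.neutral)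
    then show "m \<in> ?U" by auto
  qed
  then show "finite {m. mmult M N i m \<noteq> 0}" using fU finite_subset by blast
qed

lemma mmult_assoc_row:
  assumes "rowfin M" "rowfin N"
  shows "mmult (mmult M N) P = mmult M (mmult N P)"
proof (intro ext)
  fix i j
  let ?K = "{k. M i k \<noteq> 0}"
  let ?U = "\<Union>k\<in>?K. {m. N k m \<noteq> 0}"
  have fK: "finite ?K" using assms by (auto simp: rowfin_def)
  have fU: "finite ?U" using assms by (auto simp: rowfin_def)
  have MN: "mmult M N i m = (\<Sum>k\<in>?K. M i k * N k m)" for m
    using mmult_row[OF assms(1)] .
  have MN0: "mmult M N i m = 0" if "m \<notin> ?U" for m
    unfolding MN using that by (auto intro!: sum.neutral)
  have "mmult (mmult M N) P i j = (\<Sum>m\<in>?U. mmult M N i m * P m j)"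
    by (rule mmult_fin[OF fU]) (simp add: MN0)
  also have "\<dots> = (\<Sum>m\<in>?U. \<Sum>k\<in>?K. M i k * N k m * P m j)"
    by (simp add: MN sum_distrib_right)
  also have "\<dots> = (\<Sum>k\<in>?K. \<Sum>m\<in>?U. M i k * N k m * P m j)"
    by (rule sum.swap)
  also have "\<dots> = (\<Sum>k\<in>?K. M i k * mmult N P k j)"
  proof (rule sum.cong[OF refl])
    fix k assume k: "k \<in> ?K"
    have "mmult N P k j = (\<Sum>m\<in>?U. N k m * P m j)"
      by (rule mmult_fin[OF fU]) (use k in auto)
    then show "(\<Sum>m\<in>?U. M i k * N k m * P m j) = M i k * mmult N P k j"
      by (simp add: sum_distrib_left mult.assoc)
  qed
  also have "\<dots> = mmult M (mmult N P) i j"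
    by (rule mmult_row[OF assms(1), symmetric])
  finally show "mmult (mmult M N) P i j = mmult M (mmult N P) i j" .
qed

lemma mtranspose_mmult: "mtranspose (mmult M N) = mmult (mtranspose N) (mtranspose M)"
  by (auto simp: mtranspose_def mmult_def mult.commute intro!: ext)

lemma mtranspose_mtranspose[simp]: "mtranspose (mtranspose M) = M"
  by (simp add: mtranspose_def)

lemma colfin_rowfin: "colfin M \<longleftrightarrow> rowfin (mtranspose M)"
  by (simp add: colfin_def rowfin_def mtranspose_def)

lemma colfin_mmult:
  assumes "colfin M" "colfin N"
  shows "colfin (mmult M N)"
  using rowfin_mmult[of "mtranspose N" "mtranspose M"] assms
  by (simp add: colfin_rowfin mtranspose_mmult)

lemma mmult_assoc_col:
  assumes "colfin N" "colfin P"
  shows "mmult (mmult M N) P = mmult M (mmult N P)"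
proof -
  have "mmult (mmult M N) P = mtranspose (mmult (mtranspose P) (mmult (mtranspose N) (mtranspose M)))"
    by (simp add: mtranspose_mmult[symmetric])
  also have "\<dots> = mtranspose (mmult (mmult (mtranspose P) (mtranspose N)) (mtranspose M))"
    using assms by (simp add: colfin_rowfin mmult_assoc_row)
  also have "\<dots> = mmult M (mmult N P)"
    by (simp add: mtranspose_mmult[symmetric])
  finally show ?thesis .
qed

lemma mmult_id_left[simp]: "mmult midentity N = N"
proof (intro ext)
  fix i j
  have "mmult midentity N i j = (\<Sum>k\<in>{i}. midentity i k * N k j)"
    by (rule mmult_fin) (auto simp: midentity_def)
  then show "mmult midentity N i j = N i j" by (simp add: midentity_def)
qed

lemma mmult_id_right[simp]: "mmult M midentity = M"
proof (intro ext)
  fix i j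
  have "mmult M midentity i j = (\<Sum>k\<in>{j}. M i k * midentity k j)"
    by (rule mmult_fin) (auto simp: midentity_def)
  then show "mmult M midentity i j = M i j" by (simp add: midentity_def)
qed

lemma mmult_scale_right: "mmult M (\<lambda>i j. c * N i j) = (\<lambda>i j. c * mmult M N i j)"
  unfolding mmult_def by (intro ext) (simp add: mult.left_commute infsum_cmult_right')

lemma mmult_scale_left: "mmult (\<lambda>i j. c * M i j) N = (\<lambda>i j. c * mmult M N i j)"
  unfolding mmult_def by (intro ext) (simp add: mult.assoc infsum_cmult_right')

lemma mpow_Lam: "mpow Lam n = (\<lambda>i j. if j = i + n then 1 else 0)"
proof (induction n)
  case 0 then show ?case by (auto simp: midentity_def intro!: ext)
next
  case (Suc n)
  show ?case
  proof (intro ext)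
    fix i j
    have "mpow Lam (Suc n) i j = (\<Sum>k\<in>{i+n}. mpow Lam n i k * Lam k j)"
      by (simp only: mpow.simps) (rule mmult_fin, auto simp: Suc)
    then show "mpow Lam (Suc n) i j = (if j = i + Suc n then 1 else 0)"
      by (simp add: Suc) (auto simp: Lam_def)
  qed
qed

lemma mpow_Lam_inv: "mpow Lam_inv n = (\<lambda>i j. if i = j + n then 1 else 0)"
proof (induction n)
  case 0 then show ?case by (auto simp: midentity_def intro!: ext)
next
  case (Suc n)
  show ?case
  proof (intro ext)
    fix i j
    have "mpow Lam_inv (Suc n) i j = (\<Sum>k\<in>{j+1}. mpow Lam_inv n i k * Lam_inv k j)"
      by (simp only: mpow.simps) (rule mmult_fin, auto simp: Suc Lam_inv_def mtranspose_def Lam_def)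
    then show "mpow Lam_inv (Suc n) i j = (if i = j + Suc n then 1 else 0)"
      by (simp add: Suc) (auto simp: Lam_inv_def mtranspose_def Lam_def)
  qed
qed

lemma lower_inv:
  assumes L0: "\<And>i k. i < k \<Longrightarrow> L i k = 0" and L1: "\<And>i. L i i = 1"
    and inv: "mmult L X = midentity"
  shows "i < j \<Longrightarrow> X i j = 0"
proof (induction i arbitrary: j rule: less_induct)
  case (less i)
  have "mmult L X i j = (\<Sum>k\<in>{..i}. L i k * X k j)"
    by (rule mmult_fin) (auto simp: L0)
  also have "\<dots> = L i i * X i j + (\<Sum>k\<in>{..<i}. L i k * X k j)"
    by (simp add: lessThan_Suc_atMost[symmetric])
  also have "(\<Sum>k\<in>{..<i}. L i k * X k j) = 0"
    using less by (auto intro!: sum.neutral)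
  finally have "mmult L X i j = X i j" by (simp add: L1)
  then show ?case using inv less.prems by (simp add: midentity_def)
qed

lemma upper_inv:
  assumes U0: "\<And>k j. j < k \<Longrightarrow> U k j = 0" and U1: "\<And>j. U j j \<noteq> 0"
    and inv: "mmult X U = midentity"
  shows "j < i \<Longrightarrow> X i j = 0"
proof (induction j arbitrary: i rule: less_induct)
  case (less j)
  have "mmult X U i j = (\<Sum>k\<in>{..j}. X i k * U k j)"
    by (rule mmult_fin) (auto simp: U0)
  also have "\<dots> = X i j * U j j + (\<Sum>k\<in>{..<j}. X i k * U k j)"
    by (simp add: lessThan_Suc_atMost[symmetric])
  also have "(\<Sum>k\<in>{..<j}. X i k * U k j) = 0"
    using less by (auto intro!: sum.neutral)
  finally have "mmult X U i j = X i j * U j j" by simp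
  then show ?case using inv less.prems U1[of j] by (simp add: midentity_def)
qed

lemma rowfin_lower: "(\<And>i k. i < k \<Longrightarrow> M i k = 0) \<Longrightarrow> rowfin M"
  unfolding rowfin_def
proof
  fix i assume "\<And>i k. i < k \<Longrightarrow> M i k = 0"
  then have "{k. M i k \<noteq> 0} \<subseteq> {..i}" by (auto simp: not_le[symmetric])
  then show "finite {k. M i k \<noteq> 0}" using finite_subset by blast
qed

lemma colfin_upper: "(\<And>k j. j < k \<Longrightarrow> M k j = 0) \<Longrightarrow> colfin M"
  unfolding colfin_def
proof
  fix j assume "\<And>k j. j < k \<Longrightarrow> M k j = 0"
  then have "{k. M k j \<noteq> 0} \<subseteq> {..j}" by (auto simp: not_le[symmetric])
  then show "finite {k. M k j \<noteq> 0}" using finite_subset by blast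
qed

theorem corollary2p1:
  fixes a b :: nat
    and \<mu> :: cmat
    and p1 p2 hp1 hp2 :: "nat \<Rightarrow> complex poly"
    and h hh :: "nat \<Rightarrow> complex"
    and S1 S2 S2inv hS1 hS1inv hS2 hS2inv :: cmat
  assumes ab: "a \<ge> 1" "b \<ge> 1"
    and per: "\<And>i j. \<mu> (i + a) (j + b) = \<mu> i j"
    and monic: "\<And>j. monic_deg (p1 j) j" "\<And>j. monic_deg (p2 j) j"
               "\<And>j. monic_deg (hp1 j) j" "\<And>j. monic_deg (hp2 j) j"
    and orth: "\<And>i j. bilin \<mu> (p1 i) (p2 j) = (if i = j then h i else 0)"
    and horth: "\<And>i j. bilin (\<lambda>i j. \<mu> i (j + b)) (hp1 i) (hp2 j) = (if i = j then hh i else 0)"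
    and hnz: "\<And>i. h i \<noteq> 0" "\<And>i. hh i \<noteq> 0"
    and S1_coeffs: "\<And>i k. S1 i k = coeff (p1 i) k"
    and S2inv_coeffs: "\<And>k i. S2inv k i = coeff (p2 i) k / h i"
    and S2_inv: "mmult S2 S2inv = midentity" "mmult S2inv S2 = midentity"
    and hS1_coeffs: "\<And>i k. hS1 i k = coeff (hp1 i) k"
    and hS1_inv: "mmult hS1 hS1inv = midentity" "mmult hS1inv hS1 = midentity"
    and hS2inv_coeffs: "\<And>k i. hS2inv k i = coeff (hp2 i) k / hh i"
    and hS2_inv: "mmult hS2 hS2inv = midentity" "mmult hS2inv hS2 = midentity"
    and A_eq: "mmult (mmult S1 (mpow Lam a)) hS1inv = mmult S2 hS2inv"
    and B_eq: "mmult S1 hS1inv = mmult (mmult S2 (mpow Lam_inv b)) hS2inv"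
  defines "A \<equiv> mmult S2 hS2inv"
    and "B \<equiv> mmult S1 hS1inv"
  shows "(\<forall>i z. infsum (\<lambda>j. A i j * poly (hp1 j) z) UNIV
               = z ^ a * infsum (\<lambda>j. B i j * poly (hp1 j) z) UNIV)
       \<and> (\<forall>i z. infsum (\<lambda>j. B j i * (poly (p2 j) z / h j)) UNIV
               = z ^ b * infsum (\<lambda>j. A j i * (poly (p2 j) z / h j)) UNIV)"
proof -
  have deg: "degree (p1 j) = j" "degree (p2 j) = j" "degree (hp1 j) = j" "degree (hp2 j) = j"
    and lc: "coeff (hp1 j) j = 1" "coeff (p2 j) j = 1" "coeff (hp2 j) j = 1" for j
    using monic unfolding monic_deg_def by metis+
  have S1_0: "S1 i k = 0" if "i < k" for i k
    using that deg by (simp add: S1_coeffs coeff_eq_0)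
  have hS1_0: "hS1 i k = 0" if "i < k" for i k
    using that deg by (simp add: hS1_coeffs coeff_eq_0)
  have hS1inv_0: "hS1inv i k = 0" if "i < k" for i k
  proof -
    have d: "hS1 i i = 1" for i using lc(1)[of i] hS1_coeffs[of i i] by simp
    show ?thesis by (rule lower_inv[OF hS1_0 d hS1_inv(1) that])
  qed
  have S2inv_0: "S2inv k j = 0" if "j < k" for k j
    using that deg by (simp add: S2inv_coeffs coeff_eq_0)
  have S2_0: "S2 k j = 0" if "j < k" for k j
  proof -
    have d: "S2inv j j \<noteq> 0" for j using lc(2)[of j] S2inv_coeffs[of j j] hnz(1)[of j] by simp
    show ?thesis by (rule upper_inv[OF S2inv_0 d S2_inv(1) that])
  qed
  have hS2inv_0: "hS2inv k j = 0" if "j < k" for k j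
    using that deg by (simp add: hS2inv_coeffs coeff_eq_0)
  define L where "L = mpow Lam a"
  define Li where "Li = mpow Lam_inv b"
  have rL: "rowfin L" unfolding L_def mpow_Lam rowfin_def
  proof
    fix i show "finite {k. (if k = i + a then 1 else 0) \<noteq> (0::complex)}"
      by (rule finite_subset[of _ "{i+a}"]) auto
  qed
  have cLi: "colfin Li" unfolding Li_def mpow_Lam_inv colfin_def
  proof
    fix j show "finite {k. (if k = j + b then 1 else 0) \<noteq> (0::complex)}"
      by (rule finite_subset[of _ "{j+b}"]) auto
  qed
  have rS1: "rowfin S1" by (rule rowfin_lower[OF S1_0])
  have rhS1: "rowfin hS1" by (rule rowfin_lower[OF hS1_0])
  have rhS1inv: "rowfin hS1inv" by (rule rowfin_lower[OF hS1inv_0])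
  have cS2: "colfin S2" by (rule colfin_upper[OF S2_0])
  have cS2inv: "colfin S2inv" by (rule colfin_upper[OF S2inv_0])
  have chS2inv: "colfin hS2inv" by (rule colfin_upper[OF hS2inv_0])
  have part1: "infsum (\<lambda>j. A i j * poly (hp1 j) z) UNIV
               = z ^ a * infsum (\<lambda>j. B i j * poly (hp1 j) z) UNIV" for i z
  proof -
    define Z :: cmat where "Z = (\<lambda>m j. z ^ m)"
    have hp: "poly (hp1 j) z = mmult hS1 Z j 0" for j
    proof -
      have "mmult hS1 Z j 0 = (\<Sum>k\<in>{..j}. hS1 j k * Z k 0)"
        by (rule mmult_fin) (auto simp: hS1_0)
      then show ?thesis by (simp add: poly_altdef deg hS1_coeffs Z_def)
    qed
    have E1: "mmult hS1inv (mmult hS1 Z) = Z"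
      using mmult_assoc_row[OF rhS1inv rhS1, of Z] hS1_inv(2) by simp
    have LZ: "mmult L Z = (\<lambda>i j. z ^ a * Z i j)"
    proof (intro ext)
      fix i j
      have "mmult L Z i j = (\<Sum>k\<in>{i+a}. L i k * Z k j)"
        by (rule mmult_fin) (auto simp: L_def mpow_Lam)
      then show "mmult L Z i j = z ^ a * Z i j"
        by (simp add: L_def mpow_Lam Z_def power_add)
    qed
    have "mmult A (mmult hS1 Z) = mmult (mmult (mmult S1 L) hS1inv) (mmult hS1 Z)"
      using A_eq by (simp add: A_def L_def)
    also have "\<dots> = mmult (mmult S1 L) Z"
      by (simp add: mmult_assoc_row[OF rowfin_mmult[OF rS1 rL] rhS1inv] E1)
    also have "\<dots> = (\<lambda>i j. z ^ a * mmult S1 Z i j)"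
      by (simp add: mmult_assoc_row[OF rS1 rL] LZ mmult_scale_right)
    finally have EA: "mmult A (mmult hS1 Z) = (\<lambda>i j. z ^ a * mmult S1 Z i j)" .
    have EB: "mmult B (mmult hS1 Z) = mmult S1 Z"
      by (simp add: B_def mmult_assoc_row[OF rS1 rhS1inv] E1)
    show ?thesis
      using fun_cong[OF fun_cong[OF EA, of i], of 0] fun_cong[OF fun_cong[OF EB, of i], of 0]
      by (simp add: mmult_def hp)
  qed
  have part2: "infsum (\<lambda>j. B j i * (poly (p2 j) z / h j)) UNIV
               = z ^ b * infsum (\<lambda>j. A j i * (poly (p2 j) z / h j)) UNIV" for i z
  proof -
    define Zr :: cmat where "Zr = (\<lambda>i k. z ^ k)"
    have v: "poly (p2 j) z / h j = mmult Zr S2inv 0 j" for j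
    proof -
      have "mmult Zr S2inv 0 j = (\<Sum>k\<in>{..j}. Zr 0 k * S2inv k j)"
        by (rule mmult_fin) (auto simp: S2inv_0)
      then show ?thesis
        by (simp add: poly_altdef deg S2inv_coeffs Zr_def sum_divide_distrib mult.commute)
    qed
    have ZLi: "mmult Zr Li = (\<lambda>i j. z ^ b * Zr i j)"
    proof (intro ext)
      fix i j
      have "mmult Zr Li i j = (\<Sum>k\<in>{j+b}. Zr i k * Li k j)"
        by (rule mmult_fin) (auto simp: Li_def mpow_Lam_inv)
      then show "mmult Zr Li i j = z ^ b * Zr i j"
        by (simp add: Li_def mpow_Lam_inv Zr_def power_add mult.commute)
    qed
    have Bd: "B = mmult (mmult S2 Li) hS2inv" using B_eq by (simp add: B_def Li_def)
    have cSL: "colfin (mmult S2 Li)" by (rule colfin_mmult[OF cS2 cLi])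
    have cB: "colfin B" unfolding Bd by (rule colfin_mmult[OF cSL chS2inv])
    have cA: "colfin A" unfolding A_def by (rule colfin_mmult[OF cS2 chS2inv])
    have "mmult S2inv B = mmult (mmult S2inv (mmult S2 Li)) hS2inv"
      unfolding Bd by (rule mmult_assoc_col[OF cSL chS2inv, symmetric])
    also have "mmult S2inv (mmult S2 Li) = Li"
      using mmult_assoc_col[OF cS2 cLi, of S2inv] S2_inv(2) by simp
    finally have SB: "mmult S2inv B = mmult Li hS2inv" .
    have SA: "mmult S2inv A = hS2inv"
      using mmult_assoc_col[OF cS2 chS2inv, of S2inv] S2_inv(2) by (simp add: A_def)
    have EB: "mmult (mmult Zr S2inv) B = (\<lambda>i j. z ^ b * mmult Zr hS2inv i j)"
      by (simp add: mmult_assoc_col[OF cS2inv cB] SB mmult_assoc_col[OF cLi chS2inv, symmetric]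
          ZLi mmult_scale_left)
    have EA: "mmult (mmult Zr S2inv) A = mmult Zr hS2inv"
      by (simp add: mmult_assoc_col[OF cS2inv cA] SA)
    show ?thesis
      using fun_cong[OF fun_cong[OF EA, of 0], of i] fun_cong[OF fun_cong[OF EB, of 0], of i]
      by (simp add: mmult_def v mult.commute)
  qed
  show ?thesis using part1 part2 by blast
qed

end
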